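(* For all $n\ge1$ and all $k,k'\in[n]$, the relations $\preceq_k$ and $\preceq_{k'}$ on $\mathfrak{S}_n$ coincide; that is, the posets $\textsf{Star}_k(n)$ and $\textsf{Star}_{k'}(n)$ are equal.
   Context: $\mathfrak{S}_n$ is the symmetric group on $[n]$, products taken right to left. For a pivot $k\in[n]$, a star factorization of $\pi\in\mathfrak{S}_n$ is an expression $\pi=g_1\cdots g_r$ with each $g_i$ a transposition $(k\ i)$, $i\neq k$; it is transitive if all $(k\ i)$, $i\in[n]\setminus\{k\}$, occur; $\star_k(\pi)$ is the set of transitive star factorizations of $\pi$ of the minimum possible length $n+m-2$, $m$ the number of cycles of $\pi$ (fixed points included). $\sigma\preceq_k\pi$ means there exist $\gamma\in\star_k(\sigma)$ and $\delta\in\star_k(\pi)$ with $\gamma$ a not necessarily contiguous subword of $\delta$; $\textsf{Star}_k(n)$ is $\mathfrak{S}_n$ with the relation $\preceq_k$. *)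

theory Defs
  imports "HOL-Combinatorics.Permutations" "HOL-Combinatorics.Transposition" "HOL-Library.Sublist"
begin

text \<open>A word g_1 ... g_r of permutations is evaluated right to left,
  i.e. as the composition g_1 o g_2 o ... o g_r (g_r is applied first).\<close>

definition word_prod :: "(nat \<Rightarrow> nat) list \<Rightarrow> (nat \<Rightarrow> nat)" where
  "word_prod w = foldr (\<circ>) w id"

definition num_cycles :: "nat \<Rightarrow> (nat \<Rightarrow> nat) \<Rightarrow> nat" where
  "num_cycles n \<pi> = card ((\<lambda>x. {(\<pi> ^^ j) x | j. True}) ` {1..n})"

definition star_fact :: "nat \<Rightarrow> nat \<Rightarrow> (nat \<Rightarrow> nat) \<Rightarrow> (nat \<Rightarrow> nat) list \<Rightarrow> bool" where
  "star_fact n k \<pi> w \<longleftrightarrow>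
     (\<forall>g\<in>set w. \<exists>i\<in>{1..n}. i \<noteq> k \<and> g = transpose k i) \<and> word_prod w = \<pi>"

definition transitive_star :: "nat \<Rightarrow> nat \<Rightarrow> (nat \<Rightarrow> nat) list \<Rightarrow> bool" where
  "transitive_star n k w \<longleftrightarrow> (\<forall>i\<in>{1..n}. i \<noteq> k \<longrightarrow> transpose k i \<in> set w)"

definition star_set :: "nat \<Rightarrow> nat \<Rightarrow> (nat \<Rightarrow> nat) \<Rightarrow> (nat \<Rightarrow> nat) list set" where
  "star_set n k \<pi> = {w. star_fact n k \<pi> w \<and> transitive_star n k w
                         \<and> length w + 2 = n + num_cycles n \<pi>}"

definition star_le :: "nat \<Rightarrow> nat \<Rightarrow> (nat \<Rightarrow> nat) \<Rightarrow> (nat \<Rightarrow> nat) \<Rightarrow> bool" where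
  "star_le n k \<sigma> \<pi> \<longleftrightarrow> (\<exists>\<gamma>\<in>star_set n k \<sigma>. \<exists>\<delta>\<in>star_set n k \<pi>. subseq \<gamma> \<delta>)"

end

theory Submission
  imports Defs "HOL-Combinatorics.Orbits"
begin

lemma word_prod_Nil[simp]: "word_prod [] = id" by (simp add: word_prod_def)
lemma word_prod_Cons[simp]: "word_prod (x#w) = x \<circ> word_prod w" by (simp add: word_prod_def)
lemma word_prod_append[simp]: "word_prod (u@v) = word_prod u \<circ> word_prod v"
  by (induction u) auto

lemma nc_orbit:
  assumes "permutation p" shows "num_cycles n p = card (orbit p ` {1..n})"
proof -
  have e: "(\<lambda>x. {(p ^^ j) x | j. True}) = orbit p"
    using orbit_altdef_permutation[OF assms] by auto
  show ?thesis unfolding num_cycles_def e by (rule refl)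
qed

lemma nc_id: "num_cycles n id = n"
proof -
  have "orbit id y = {y}" for y :: nat by (simp add: orbit_eq_singleton_iff)
  then have "orbit id ` {1..n} = (\<lambda>y. {y}) ` {1..n}" by auto
  moreover have "card ((\<lambda>y::nat. {y}) ` {1..n}) = n" by (subst card_image) (auto simp: inj_on_def)
  ultimately show ?thesis by (simp add: nc_orbit)
qed

lemma orbit_part:
  assumes "permutation f" "w \<in> orbit f y" shows "orbit f w = orbit f y"
proof
  show "orbit f w \<subseteq> orbit f y" using orbit_trans[OF _ assms(2)] by auto
  have "y \<in> orbit f w" using orbit_swap[OF permutation_self_in_orbit[OF assms(1)] assms(2)] .
  then show "orbit f y \<subseteq> orbit f w" using orbit_trans[of _ f y w] by auto
qed

lemma merge:
  fixes f :: "nat \<Rightarrow> nat"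
  assumes fp: "f permutes {1..n}" and x: "x \<in> {1..n}" and z: "z \<in> {1..n}" and xz: "x \<noteq> z"
    and fx: "f x = x"
  shows "num_cycles n (f \<circ> transpose x z) + 1 = num_cycles n f"
proof -
  define g where "g = f \<circ> transpose x z"
  define S where "S = {1..n::nat}"
  define O' where "O' = orbit f z"
  have pf: "permutation f" using fp permutation_permutes by blast
  have gp: "g permutes {1..n}" unfolding g_def using fp x z by (intro permutes_compose permutes_swap_id)
  then have pg: "permutation g" using permutation_permutes by blast
  have ox: "orbit f x = {x}" using fx orbit_eq_singleton_iff by metis
  have zO: "z \<in> O'" unfolding O'_def using permutation_self_in_orbit[OF pf] .
  have xO: "x \<notin> O'"
  proof
    assume "x \<in> O'" then have "orbit f x = O'" unfolding O'_def using orbit_part[OF pf] by blast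
    then show False using zO ox xz by auto
  qed
  have hO: "orbit f y = O'" if "y \<in> O'" for y unfolding O'_def using orbit_part[OF pf] that O'_def by blast
  have gx: "g x = f z" unfolding g_def by simp
  have gz: "g z = x" unfolding g_def using fx by simp
  have gy: "g y = f y" if "y \<noteq> x" "y \<noteq> z" for y unfolding g_def using that by simp
  have ogx: "orbit g x = insert x O'"
  proof
    show "orbit g x \<subseteq> insert x O'"
    proof
      fix y assume "y \<in> orbit g x"
      then show "y \<in> insert x O'"
      proof induction
        case base then show ?case using gx orbit.base[of f z] O'_def by simp
      next
        case (step y)
        show ?case
        proof (cases "y = x")
          case True then show ?thesis using gx orbit.base[of f z] O'_def step by simp
        next
          case False
          then have "y \<in> O'" using step by auto
          show ?thesis
          proof (cases "y = z")
            case True then show ?thesis using gz by auto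
          next
            case False
            have "f y \<in> O'" using \<open>y \<in> O'\<close> orbit.step[of y f z] unfolding O'_def by simp
            then show ?thesis using gy[OF \<open>y\<noteq>x\<close> False] by simp
          qed
        qed
      qed
    qed
    have xg: "x \<in> orbit g x" using permutation_self_in_orbit[OF pg] .
    have "z \<in> orbit g x"
      using orbit_swap[OF permutation_self_in_orbit[OF pg] orbit.base[of g z, unfolded gz]] .
    have "w \<in> orbit g x" if "w \<in> O'" for w
      using that unfolding O'_def
    proof induction
      case base then show ?case using gx orbit.base by metis
    next
      case (step w)
      show ?case
      proof (cases "w = x")
        case True then show ?thesis using fx xg by simp
      next
        case False
        show ?thesis
        proof (cases "w = z")
          case True then show ?thesis using gx orbit.base by metis
        next
          case False then show ?thesis using gy[OF \<open>w\<noteq>x\<close> False] step orbit.step by metis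
        qed
      qed
    qed
    then show "insert x O' \<subseteq> orbit g x" using xg by auto
  qed
  have og1: "orbit g y = insert x O'" if "y \<in> insert x O'" for y
    using orbit_part[OF pg, of y x] that ogx by simp
  have og2: "orbit g y = orbit f y" if "y \<notin> insert x O'" for y
  proof -
    have "x \<notin> orbit f y"
    proof
      assume "x \<in> orbit f y" then have "orbit f y = {x}" using orbit_part[OF pf] ox by metis
      then show False using that permutation_self_in_orbit[OF pf, of y] by auto
    qed
    moreover have "z \<notin> orbit f y"
    proof
      assume "z \<in> orbit f y" then have "orbit f y = O'" using orbit_part[OF pf] O'_def by metis
      then show False using that permutation_self_in_orbit[OF pf, of y] by auto
    qed
    ultimately show ?thesis
      by (intro orbit_cong permutation_self_in_orbit[OF pf]) (metis gy)
  qed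
  define B where "B = orbit f ` (S - insert x O')"
  have sp: "S = (S \<inter> insert x O') \<union> (S - insert x O')" by blast
  have i1: "orbit g ` (S \<inter> insert x O') = {insert x O'}"
  proof -
    have "orbit g ` (S \<inter> insert x O') = (\<lambda>_. insert x O') ` (S \<inter> insert x O')"
      by (rule image_cong) (auto simp: og1)
    also have "\<dots> = {insert x O'}" using x S_def by (intro image_constant) auto
    finally show ?thesis .
  qed
  have i2: "orbit g ` (S - insert x O') = B" unfolding B_def
    by (rule image_cong) (auto simp: og2)
  have eg: "orbit g ` S = insert (insert x O') B"
    by (subst sp) (simp only: image_Un i1 i2, simp)
  have sp2: "S = insert x ((S \<inter> O') \<union> (S - insert x O'))" using x S_def by blast
  have j1: "orbit f ` (S \<inter> O') = {O'}"
  proof -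
    have "orbit f ` (S \<inter> O') = (\<lambda>_. O') ` (S \<inter> O')"
      by (rule image_cong) (auto simp: hO)
    also have "\<dots> = {O'}" using z zO S_def by (intro image_constant) auto
    finally show ?thesis .
  qed
  have ef: "orbit f ` S = insert O' (insert {x} B)"
    by (subst sp2) (simp only: image_Un image_insert j1 B_def ox, auto)
  have finB: "finite B" unfolding B_def S_def by auto
  have n1: "insert x O' \<notin> B"
  proof
    assume "insert x O' \<in> B" then obtain y where "y \<in> S - insert x O'" "insert x O' = orbit f y"
      by (auto simp: B_def)
    then show False using permutation_self_in_orbit[OF pf, of y] by auto
  qed
  have n2: "O' \<notin> B"
  proof
    assume "O' \<in> B" then obtain y where "y \<in> S - insert x O'" "O' = orbit f y"
      by (auto simp: B_def)
    then show False using permutation_self_in_orbit[OF pf, of y] by auto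
  qed
  have n3: "{x} \<notin> B"
  proof
    assume "{x} \<in> B" then obtain y where "y \<in> S - insert x O'" "{x} = orbit f y"
      by (auto simp: B_def)
    then show False using permutation_self_in_orbit[OF pf, of y] by auto
  qed
  have n4: "O' \<noteq> {x}" using zO xz by auto
  have "num_cycles n g = card (orbit g ` S)" using nc_orbit[OF pg] unfolding S_def .
  also have "\<dots> = card B + 1" unfolding eg using finB n1 by simp
  finally have c1: "num_cycles n g = card B + 1" .
  have "num_cycles n f = card (orbit f ` S)" using nc_orbit[OF pf] unfolding S_def .
  also have "\<dots> = card B + 2" unfolding ef using finB n2 n3 n4 by simp
  finally have c2: "num_cycles n f = card B + 2" .
  from c1 c2 show ?thesis unfolding g_def by simp
qed

definition SL :: "nat \<Rightarrow> nat \<Rightarrow> (nat \<Rightarrow> nat) list \<Rightarrow> bool" where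
  "SL n k w \<longleftrightarrow> (\<forall>g\<in>set w. \<exists>i\<in>{1..n}. i \<noteq> k \<and> g = transpose k i)"

definition TL :: "nat \<Rightarrow> (nat \<Rightarrow> nat) list \<Rightarrow> bool" where
  "TL n ts \<longleftrightarrow> (\<forall>t\<in>set ts. \<exists>a\<in>{1..n}. \<exists>b\<in>{1..n}. a \<noteq> b \<and> t = transpose a b)"

lemma SL_Cons[simp]: "SL n k (x#w) \<longleftrightarrow> (\<exists>i\<in>{1..n}. i \<noteq> k \<and> x = transpose k i) \<and> SL n k w"
  by (auto simp: SL_def)
lemma SL_append[simp]: "SL n k (u@w) \<longleftrightarrow> SL n k u \<and> SL n k w"
  by (auto simp: SL_def)
lemma SL_Nil[simp]: "SL n k []" by (simp add: SL_def)

lemma SL_permutes: "SL n k w \<Longrightarrow> k \<in> {1..n} \<Longrightarrow> word_prod w permutes {1..n}"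
proof (induction w)
  case Nil then show ?case by (simp only: word_prod_Nil permutes_id)
next
  case (Cons x w)
  then obtain i where "i \<in> {1..n}" "x = transpose k i" by auto
  then have "x permutes {1..n}" using Cons by (auto intro!: permutes_swap_id)
  moreover have "word_prod w permutes {1..n}" using Cons by auto
  ultimately show ?case by (simp only: word_prod_Cons) (rule permutes_compose)
qed

lemma fix_word:
  assumes "\<forall>g\<in>set w. \<exists>i. g = transpose k i" "a \<noteq> k" "transpose k a \<notin> set w"
  shows "word_prod w a = a"
  using assms
proof (induction w)
  case Nil then show ?case by simp
next
  case (Cons x w)
  then obtain i where i: "x = transpose k i" by auto
  with Cons have "i \<noteq> a" by auto
  then show ?case using Cons i by simp
qed

lemma subseq_set: "subseq xs ys \<Longrightarrow> set xs \<subseteq> set ys"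
  by (auto elim: list_emb_set)

lemma del:
  assumes "subseq \<gamma> \<delta>" "SL n k \<delta>" "k \<in> {1..n}"
  shows "\<exists>ts. TL n ts \<and> length ts + length \<gamma> = length \<delta> \<and> word_prod \<delta> = word_prod \<gamma> \<circ> word_prod ts"
  using assms
proof (induction rule: list_emb.induct)
  case (list_emb_Nil ys)
  have "TL n ys" unfolding TL_def
  proof
    fix t assume "t \<in> set ys"
    then obtain i where "i \<in> {1..n}" "i \<noteq> k" "t = transpose k i" using list_emb_Nil(1) unfolding SL_def by blast
    then show "\<exists>a\<in>{1..n}. \<exists>b\<in>{1..n}. a \<noteq> b \<and> t = transpose a b" using list_emb_Nil(2) by metis
  qed
  then show ?case by (intro exI[of _ ys]) simp
next
  case (list_emb_Cons xs ys y)
  have SLys: "SL n k ys" using list_emb_Cons.prems(1) by simp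
  obtain ts where ts: "TL n ts" "length ts + length xs = length ys" "word_prod ys = word_prod xs \<circ> word_prod ts"
    using list_emb_Cons.IH[OF SLys list_emb_Cons.prems(2)] by blast
  obtain c where c: "c \<in> {1..n}" "c \<noteq> k" "y = transpose k c" using list_emb_Cons.prems(1) by auto
  have "set xs \<subseteq> set ys" using subseq_set[OF list_emb_Cons(1)] .
  then have "SL n k xs" using SLys unfolding SL_def by blast
  define G' where "G' = word_prod xs"
  have G: "G' permutes {1..n}" unfolding G'_def using SL_permutes[OF \<open>SL n k xs\<close> list_emb_Cons.prems(2)] .
  have bG: "bij G'" using G permutes_bij by blast
  define t where "t = transpose (inv G' k) (inv G' c)"
  have i1: "inv G' k \<in> {1..n}" using permutes_in_image[OF permutes_inv[OF G]] list_emb_Cons.prems(2) by blast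
  have i2: "inv G' c \<in> {1..n}" using permutes_in_image[OF permutes_inv[OF G]] c(1) by blast
  have i3: "inv G' k \<noteq> inv G' c"
  proof
    assume "inv G' k = inv G' c"
    then have "G' (inv G' k) = G' (inv G' c)" by simp
    then show False using permutes_inverses(1)[OF G, of k] permutes_inverses(1)[OF G, of c] c(2) by simp
  qed
  have "\<exists>a\<in>{1..n}. \<exists>b\<in>{1..n}. a \<noteq> b \<and> t = transpose a b" unfolding t_def using i1 i2 i3 by blast
  then have "TL n (t#ts)" using ts(1) unfolding TL_def by simp
  moreover have "word_prod (y#ys) = word_prod xs \<circ> word_prod (t#ts)"
  proof -
    have "word_prod (y#ys) = (transpose k c \<circ> G') \<circ> word_prod ts" using ts(3) c(3) unfolding G'_def by (simp add: comp_assoc)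
    also have "transpose k c \<circ> G' = G' \<circ> t" unfolding t_def using transpose_comp_eq[OF bG] .
    finally show ?thesis unfolding G'_def by (simp add: fun_eq_iff)
  qed
  moreover have "length (t#ts) + length xs = length (y#ys)" using ts(2) by simp
  ultimately show ?case by blast
next
  case (list_emb_Cons2 x y xs ys)
  have SLys: "SL n k ys" using list_emb_Cons2.prems(1) by simp
  obtain ts where ts: "TL n ts" "length ts + length xs = length ys" "word_prod ys = word_prod xs \<circ> word_prod ts"
    using list_emb_Cons2.IH[OF SLys list_emb_Cons2.prems(2)] by blast
  have "word_prod (y#ys) = word_prod (x#xs) \<circ> word_prod ts" using ts(3) list_emb_Cons2(1) by (simp add: comp_assoc)
  moreover have "length ts + length (x#xs) = length (y#ys)" using ts(2) by simp
  ultimately show ?case using ts(1) by blast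
qed

lemma ins_gen:
  assumes w: "SL n k w" and k: "k \<in> {1..n}" and a: "a \<in> {1..n}" "a \<noteq> k" and b: "b \<in> {1..n}" "a \<noteq> b"
    and ta: "transpose k a \<in> set w"
  shows "\<exists>w'. SL n k w' \<and> subseq w w' \<and> length w' = Suc (length w) \<and> word_prod w' = word_prod w \<circ> transpose a b"
proof -
  obtain u v' where uv: "w = u @ transpose k a # v'" "transpose k a \<notin> set v'"
    using split_list_last[OF ta] by auto
  have SLv': "SL n k v'" "SL n k u" using w uv by auto
  have fv: "word_prod v' a = a"
    using fix_word[of v' k a] SLv' uv(2) a unfolding SL_def by auto
  define V where "V = transpose k a \<circ> word_prod v'"
  have Vp: "V permutes {1..n}" unfolding V_def using SL_permutes[OF SLv'(1) k] k a
    by (intro permutes_compose permutes_swap_id) auto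
  have Va: "V a = k" unfolding V_def using fv by simp
  define c where "c = V b"
  have c: "c \<in> {1..n}" unfolding c_def using permutes_in_image[OF Vp] b by auto
  have ck: "c \<noteq> k" unfolding c_def using Va b permutes_inj[OF Vp] by (metis injD)
  have ia: "inv V k = a" using permutes_inverses(2)[OF Vp, of a] Va by simp
  have ib: "inv V c = b" using permutes_inverses(2)[OF Vp, of b] c_def by simp
  define w' where "w' = u @ transpose k c # transpose k a # v'"
  have "SL n k w'" unfolding w'_def using SLv' c ck a by auto
  moreover have "subseq w w'"
  proof -
    have "subseq (transpose k a # v') (transpose k c # transpose k a # v')" by (rule list_emb_Cons) simp
    then show ?thesis unfolding w'_def uv(1) by (simp only: subseq_append')
  qed
  moreover have "length w' = Suc (length w)" unfolding w'_def uv(1) by simp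
  moreover have "word_prod w' = word_prod w \<circ> transpose a b"
  proof -
    have "word_prod w' = word_prod u \<circ> (transpose k c \<circ> V)" unfolding w'_def V_def by (simp add: comp_assoc)
    also have "transpose k c \<circ> V = V \<circ> transpose a b"
      using transpose_comp_eq[OF permutes_bij[OF Vp], of k c] ia ib by simp
    finally show ?thesis unfolding uv(1) V_def by (simp add: fun_eq_iff)
  qed
  ultimately show ?thesis by blast
qed

lemma ins1:
  assumes w: "SL n k w" and k: "k \<in> {1..n}" and tr: "\<forall>i\<in>{1..n}. i \<noteq> k \<longrightarrow> transpose k i \<in> set w"
    and a: "a \<in> {1..n}" and b: "b \<in> {1..n}" "a \<noteq> b"
  shows "\<exists>w'. SL n k w' \<and> subseq w w' \<and> length w' = Suc (length w) \<and> word_prod w' = word_prod w \<circ> transpose a b"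
proof (cases "a = k")
  case True
  have "SL n k (w @ [transpose k b])" using w b True by auto
  moreover have "subseq w (w @ [transpose k b])" using subseq_append'[of w "[]" "[transpose k b]"] by simp
  ultimately show ?thesis using True by (intro exI[of _ "w @ [transpose k b]"]) simp
next
  case False
  have "transpose k a \<in> set w" using tr a False by blast
  then show ?thesis using ins_gen[OF w k a False b] by blast
qed

lemma insN:
  assumes "TL n ts" "SL n k w" "k \<in> {1..n}" "\<forall>i\<in>{1..n}. i \<noteq> k \<longrightarrow> transpose k i \<in> set w"
  shows "\<exists>w'. SL n k w' \<and> subseq w w' \<and> length w' = length w + length ts \<and> word_prod w' = word_prod w \<circ> word_prod ts"
  using assms
proof (induction ts arbitrary: w)
  case Nil then show ?case by (intro exI[of _ w]) simp
next
  case (Cons t ts)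
  then obtain a b where ab: "a \<in> {1..n}" "b \<in> {1..n}" "a \<noteq> b" "t = transpose a b"
    unfolding TL_def by auto
  obtain w1 where w1: "SL n k w1" "subseq w w1" "length w1 = Suc (length w)" "word_prod w1 = word_prod w \<circ> t"
    using ins1[OF Cons(3,4,5) ab(1,2,3)] unfolding ab(4) by blast
  have tw1: "\<forall>i\<in>{1..n}. i \<noteq> k \<longrightarrow> transpose k i \<in> set w1" using Cons(5) subseq_set[OF w1(2)] by auto
  have tts: "TL n ts" using Cons(2) unfolding TL_def by auto
  obtain w' where w': "SL n k w'" "subseq w1 w'" "length w' = length w1 + length ts"
     "word_prod w' = word_prod w1 \<circ> word_prod ts"
    using Cons.IH[OF tts w1(1) Cons(4) tw1] by blast
  have "subseq w w'" using subseq_order.trans[OF w1(2) w'(2)] .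
  moreover have "length w' = length w + length (t#ts)" using w'(3) w1(3) by simp
  moreover have "word_prod w' = word_prod w \<circ> word_prod (t#ts)" using w'(4) w1(4) by (simp add: comp_assoc)
  ultimately show ?case using w'(1) by blast
qed


lemma tinj: "transpose k x = transpose k i \<Longrightarrow> x = i"
  by (metis transpose_apply_first)

lemma word_letters_permutes:
  assumes "\<forall>g\<in>set w. \<exists>i\<in>{1..n}. i \<noteq> k \<and> P i \<and> g = transpose k i" "k \<in> {1..n}"
  shows "word_prod w permutes {1..n}" "\<forall>g\<in>set w. \<exists>i. g = transpose k i"
proof -
  have "SL n k w" using assms(1) unfolding SL_def by blast
  then show "word_prod w permutes {1..n}" using SL_permutes assms(2) by blast
  show "\<forall>g\<in>set w. \<exists>i. g = transpose k i" using assms(1) by blast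
qed

lemma core:
  fixes k n :: nat
  assumes k: "k \<in> {1..n}"
  shows "\<sigma> permutes {1..n} \<Longrightarrow> \<exists>w. (\<forall>g\<in>set w. \<exists>i\<in>{1..n}. i \<noteq> k \<and> \<sigma> i \<noteq> i \<and> g = transpose k i)
     \<and> (\<forall>i\<in>{1..n}. i \<noteq> k \<and> \<sigma> i \<noteq> i \<longrightarrow> transpose k i \<in> set w) \<and> word_prod w = \<sigma>
     \<and> length w + 2 + 2 * card {i\<in>{1..n}. i \<noteq> k \<and> \<sigma> i = i} = n + num_cycles n \<sigma>"
proof (induction "card {i\<in>{1..n}. \<sigma> i \<noteq> i}" arbitrary: \<sigma> rule: less_induct)
  case less
  note sp = less.prems
  show ?case
  proof (cases "\<exists>x\<in>{1..n}. x \<noteq> k \<and> \<sigma> x \<noteq> x")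
    case False
    have fixall: "\<sigma> i = i" for i
    proof (cases "i \<in> {1..n}")
      case False then show ?thesis using permutes_not_in[OF sp] by blast
    next
      case True
      show ?thesis
      proof (rule ccontr)
        assume ne: "\<sigma> i \<noteq> i"
        have ik: "i = k" using False True ne by blast
        have a1: "\<sigma> i \<in> {1..n}" using permutes_in_image[OF sp] True by blast
        have a2: "\<sigma> (\<sigma> i) \<noteq> \<sigma> i"
        proof
          assume "\<sigma> (\<sigma> i) = \<sigma> i"
          then have "\<sigma> i = i" using permutes_inj[OF sp] unfolding inj_def by blast
          then show False using ne by simp
        qed
        have a3: "\<sigma> i \<noteq> k" using ne ik by simp
        show False using False a1 a2 a3 by blast
      qed
    qed
    then have sid: "\<sigma> = id" by (simp add: fun_eq_iff)
    have "{i\<in>{1..n}. i \<noteq> k \<and> \<sigma> i = i} = {1..n} - {k}" unfolding sid by auto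
    then have "card {i\<in>{1..n}. i \<noteq> k \<and> \<sigma> i = i} = n - 1" using k by simp
    moreover have "n \<ge> 1" using k by simp
    ultimately show ?thesis using sid nc_id[of n] by (intro exI[of _ "[]"]) simp
  next
    case True
    then obtain x where x: "x \<in> {1..n}" "x \<noteq> k" "\<sigma> x \<noteq> x" by blast
    define z where "z = inv \<sigma> x"
    have sz: "\<sigma> z = x" unfolding z_def using permutes_inverses(1)[OF sp] .
    have z: "z \<in> {1..n}" unfolding z_def using permutes_in_image[OF permutes_inv[OF sp]] x(1) by blast
    have xz: "x \<noteq> z" using sz x(3) by auto
    define \<sigma>' where "\<sigma>' = \<sigma> \<circ> transpose x z"
    have sp': "\<sigma>' permutes {1..n}" unfolding \<sigma>'_def using sp x(1) z by (intro permutes_compose permutes_swap_id)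
    have s'x: "\<sigma>' x = x" unfolding \<sigma>'_def using sz by simp
    have s'z: "\<sigma>' z = \<sigma> x" unfolding \<sigma>'_def by simp
    have s'o: "\<sigma>' y = \<sigma> y" if "y \<noteq> x" "y \<noteq> z" for y unfolding \<sigma>'_def using that by simp
    have bk: "\<sigma>' \<circ> transpose x z = \<sigma>" unfolding \<sigma>'_def by (simp add: comp_assoc)
    have nf: "\<sigma> i \<noteq> i" if "\<sigma>' i \<noteq> i" for i
      using that s'x sz xz s'o by (cases "i = x"; cases "i = z") auto
    have sub: "{i\<in>{1..n}. \<sigma>' i \<noteq> i} \<subseteq> {i\<in>{1..n}. \<sigma> i \<noteq> i} - {x}" using nf s'x by auto
    have "{i\<in>{1..n}. \<sigma>' i \<noteq> i} \<subset> {i\<in>{1..n}. \<sigma> i \<noteq> i}" using sub x by blast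
    then have lt: "card {i\<in>{1..n}. \<sigma>' i \<noteq> i} < card {i\<in>{1..n}. \<sigma> i \<noteq> i}"
      by (intro psubset_card_mono) auto
    obtain w' where w'1: "\<forall>g\<in>set w'. \<exists>i\<in>{1..n}. i \<noteq> k \<and> \<sigma>' i \<noteq> i \<and> g = transpose k i"
      and w'2: "\<forall>i\<in>{1..n}. i \<noteq> k \<and> \<sigma>' i \<noteq> i \<longrightarrow> transpose k i \<in> set w'"
      and w'3: "word_prod w' = \<sigma>'"
      and w'4: "length w' + 2 + 2 * card {i\<in>{1..n}. i \<noteq> k \<and> \<sigma>' i = i} = n + num_cycles n \<sigma>'"
      using less.hyps[OF lt sp'] by blast
    have mg: "num_cycles n \<sigma> + 1 = num_cycles n \<sigma>'" using merge[OF sp' x(1) z xz s'x] unfolding bk .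
    have L: "\<forall>g\<in>set w'. \<exists>i\<in>{1..n}. i \<noteq> k \<and> \<sigma> i \<noteq> i \<and> g = transpose k i"
    proof
      fix g assume "g \<in> set w'"
      then obtain i where i: "i\<in>{1..n}" "i \<noteq> k" "\<sigma>' i \<noteq> i" "g = transpose k i" using w'1 by blast
      have "\<sigma> i \<noteq> i" using nf[OF i(3)] .
      then show "\<exists>i\<in>{1..n}. i \<noteq> k \<and> \<sigma> i \<noteq> i \<and> g = transpose k i" using i by blast
    qed
    have txw': "transpose k x \<notin> set w'"
    proof
      assume "transpose k x \<in> set w'"
      then obtain i where i: "\<sigma>' i \<noteq> i" "transpose k x = transpose k i" using w'1 by blast
      have "x = i" using tinj[OF i(2)] .
      then show False using i(1) s'x by simp
    qed
    define F where "F = {i\<in>{1..n}. i \<noteq> k \<and> \<sigma> i = i}"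
    define F' where "F' = {i\<in>{1..n}. i \<noteq> k \<and> \<sigma>' i = i}"
    have finF: "finite F" unfolding F_def by auto
    have xF: "x \<notin> F" unfolding F_def using x by auto
    have zF: "z \<notin> F" unfolding F_def using sz xz by auto
    show ?thesis
    proof (cases "z = k")
      case True
      have FF: "F' = insert x F"
      proof (rule set_eqI)
        fix i show "i \<in> F' \<longleftrightarrow> i \<in> insert x F"
        proof (cases "i = x")
          case True then show ?thesis unfolding F'_def F_def using s'x x by auto
        next
          case ix: False
          show ?thesis
          proof (cases "i = k")
            case True then show ?thesis unfolding F'_def F_def using x by auto
          next
            case iz: False then show ?thesis unfolding F'_def F_def using s'o[OF ix] \<open>z = k\<close> ix by auto
          qed
        qed
      qed
      define w where "w = w' @ [transpose k x]"
      have "\<forall>g\<in>set w. \<exists>i\<in>{1..n}. i \<noteq> k \<and> \<sigma> i \<noteq> i \<and> g = transpose k i" unfolding w_def using L x by auto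
      moreover have "\<forall>i\<in>{1..n}. i \<noteq> k \<and> \<sigma> i \<noteq> i \<longrightarrow> transpose k i \<in> set w"
        unfolding w_def using w'2 s'o True by fastforce
      moreover have "word_prod w = \<sigma>" unfolding w_def using w'3 bk True by (simp add: transpose_commute)
      moreover have "length w + 2 + 2 * card F = n + num_cycles n \<sigma>"
        using w'4 mg FF finF xF unfolding w_def F'_def[symmetric] by simp
      ultimately show ?thesis unfolding F_def by blast
    next
      case zk: False
      show ?thesis
      proof (cases "\<sigma> x = z")
        case False
        have FF: "F' = insert x F"
        proof (rule set_eqI)
          fix i show "i \<in> F' \<longleftrightarrow> i \<in> insert x F"
          proof (cases "i = x")
            case True then show ?thesis unfolding F'_def F_def using s'x x by auto
          next
            case ix: False
            show ?thesis
            proof (cases "i = z")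
              case True then show ?thesis unfolding F'_def F_def using s'z False sz xz ix by auto
            next
              case iz: False then show ?thesis unfolding F'_def F_def using s'o[OF ix iz] ix by auto
            qed
          qed
        qed
        have "transpose k z \<in> set w'" using w'2 z zk s'z False by auto
        then obtain u v' where uv: "w' = u @ transpose k z # v'" "transpose k z \<notin> set v'"
          using split_list_last by metis
        define V where "V = transpose k z \<circ> word_prod v'"
        have Lv: "\<forall>g\<in>set v'. \<exists>i\<in>{1..n}. i \<noteq> k \<and> \<sigma> i \<noteq> i \<and> g = transpose k i" using L uv(1) by auto
        have Vp: "V permutes {1..n}" unfolding V_def using word_letters_permutes(1)[OF Lv k] k z
          by (intro permutes_compose permutes_swap_id) auto
        have "word_prod v' z = z" using fix_word[OF word_letters_permutes(2)[OF Lv k] zk uv(2)] .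
        then have Vz: "V z = k" unfolding V_def by simp
        have "transpose k x \<notin> set (transpose k z # v')" using txw' uv(1) by auto
        then have Vx: "V x = x" unfolding V_def
          using fix_word[of "transpose k z # v'" k x] word_letters_permutes(2)[OF Lv k] x(2) by auto
        have ik: "inv V k = z" using permutes_inverses(2)[OF Vp, of z] Vz by simp
        have ix: "inv V x = x" using permutes_inverses(2)[OF Vp, of x] Vx by simp
        have tc: "transpose k x \<circ> V = V \<circ> transpose z x"
          using transpose_comp_eq[OF permutes_bij[OF Vp], of k x] ik ix by simp
        define w where "w = u @ transpose k x # transpose k z # v'"
        have "\<forall>g\<in>set w. \<exists>i\<in>{1..n}. i \<noteq> k \<and> \<sigma> i \<noteq> i \<and> g = transpose k i"
          unfolding w_def using L x uv(1) by auto
        moreover have "\<forall>i\<in>{1..n}. i \<noteq> k \<and> \<sigma> i \<noteq> i \<longrightarrow> transpose k i \<in> set w"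
        proof (intro ballI impI)
          fix i assume i: "i \<in> {1..n}" "i \<noteq> k \<and> \<sigma> i \<noteq> i"
          have "set w' \<subseteq> set w" unfolding w_def uv(1) by auto
          moreover have "transpose k x \<in> set w" unfolding w_def by simp
          moreover have "i \<noteq> x \<Longrightarrow> \<sigma>' i \<noteq> i" using s'o s'z False i by (cases "i = z") auto
          ultimately show "transpose k i \<in> set w" using w'2 i by blast
        qed
        moreover have "word_prod w = \<sigma>"
        proof -
          have "word_prod w = word_prod u \<circ> (transpose k x \<circ> V)" unfolding w_def V_def by (simp add: comp_assoc)
          also have "\<dots> = word_prod u \<circ> V \<circ> transpose z x" using tc by (simp add: comp_assoc)
          also have "word_prod u \<circ> V = \<sigma>'" using w'3 uv(1) unfolding V_def by (simp add: comp_assoc)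
          finally show ?thesis using bk by (simp add: transpose_commute)
        qed
        moreover have "length w + 2 + 2 * card F = n + num_cycles n \<sigma>"
          using w'4 mg FF finF xF uv(1) unfolding w_def F'_def[symmetric] by simp
        ultimately show ?thesis unfolding F_def by blast
      next
        case True
        have FF: "F' = insert x (insert z F)"
        proof (rule set_eqI)
          fix i show "i \<in> F' \<longleftrightarrow> i \<in> insert x (insert z F)"
          proof (cases "i = x")
            case True then show ?thesis unfolding F'_def F_def using s'x x by auto
          next
            case ix: False
            show ?thesis
            proof (cases "i = z")
              case iz: True then show ?thesis unfolding F'_def F_def using s'z True z zk by auto
            next
              case iz: False then show ?thesis unfolding F'_def F_def using s'o[OF ix iz] ix iz by auto
            qed
          qed
        qed
        define w where "w = w' @ [transpose k z, transpose k x, transpose k z]"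
        have "\<forall>g\<in>set w. \<exists>i\<in>{1..n}. i \<noteq> k \<and> \<sigma> i \<noteq> i \<and> g = transpose k i"
          unfolding w_def using L x z zk sz xz by auto
        moreover have "\<forall>i\<in>{1..n}. i \<noteq> k \<and> \<sigma> i \<noteq> i \<longrightarrow> transpose k i \<in> set w"
        proof (intro ballI impI)
          fix i assume i: "i \<in> {1..n}" "i \<noteq> k \<and> \<sigma> i \<noteq> i"
          show "transpose k i \<in> set w"
          proof (cases "i = x \<or> i = z")
            case True then show ?thesis unfolding w_def by auto
          next
            case False then show ?thesis using w'2 i s'o unfolding w_def by auto
          qed
        qed
        moreover have "word_prod w = \<sigma>"
        proof -
          have "transpose z k \<circ> transpose k x \<circ> transpose z k = transpose z x"
            using transpose_comp_triple[of z x k] xz x(2) by auto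
          then have "transpose k z \<circ> (transpose k x \<circ> transpose k z) = transpose x z"
            by (simp add: transpose_commute comp_assoc)
          then show ?thesis unfolding w_def using w'3 bk by (simp add: comp_assoc)
        qed
        moreover have "length w + 2 + 2 * card F = n + num_cycles n \<sigma>"
          using w'4 mg FF finF xF zF xz unfolding w_def F'_def[symmetric] by simp
        ultimately show ?thesis unfolding F_def by blast
      qed
    qed
  qed
qed


lemma pad_prod: "word_prod (concat (map (\<lambda>i. [transpose k i, transpose k i]) L)) = id"
  by (induction L) (auto simp: fun_eq_iff)

lemma pad_len: "length (concat (map (\<lambda>i. [transpose k i, transpose k i]) L)) = 2 * length L"
  by (induction L) auto

lemma pad_set: "set (concat (map (\<lambda>i. [transpose k i, transpose k i]) L)) = (\<lambda>i. transpose k i) ` set L"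
  by (induction L) auto

lemma exist:
  assumes sp: "\<sigma> permutes {1..n}" and k: "k \<in> {1..n}"
  shows "\<exists>\<gamma>. \<gamma> \<in> star_set n k \<sigma>"
proof -
  obtain w where w1: "\<forall>g\<in>set w. \<exists>i\<in>{1..n}. i \<noteq> k \<and> \<sigma> i \<noteq> i \<and> g = transpose k i"
    and w2: "\<forall>i\<in>{1..n}. i \<noteq> k \<and> \<sigma> i \<noteq> i \<longrightarrow> transpose k i \<in> set w"
    and w3: "word_prod w = \<sigma>"
    and w4: "length w + 2 + 2 * card {i\<in>{1..n}. i \<noteq> k \<and> \<sigma> i = i} = n + num_cycles n \<sigma>"
    using core[OF k sp] by blast
  define F where "F = {i\<in>{1..n}. i \<noteq> k \<and> \<sigma> i = i}"
  have finF: "finite F" unfolding F_def by auto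
  define L where "L = sorted_list_of_set F"
  have sL: "set L = F" unfolding L_def using finF by simp
  have lL: "length L = card F" unfolding L_def by simp
  define pad where "pad = concat (map (\<lambda>i. [transpose k i, transpose k i]) L)"
  define \<gamma> where "\<gamma> = pad @ w"
  have "\<forall>g\<in>set \<gamma>. \<exists>i\<in>{1..n}. i \<noteq> k \<and> g = transpose k i"
  proof
    fix g assume "g \<in> set \<gamma>"
    then have "g \<in> set pad \<or> g \<in> set w" unfolding \<gamma>_def by simp
    then show "\<exists>i\<in>{1..n}. i \<noteq> k \<and> g = transpose k i"
    proof
      assume "g \<in> set pad"
      then obtain i where "i \<in> F" "g = transpose k i" unfolding pad_def pad_set sL by blast
      then show ?thesis unfolding F_def by blast
    next
      assume "g \<in> set w" then show ?thesis using w1 by blast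
    qed
  qed
  moreover have "word_prod \<gamma> = \<sigma>" unfolding \<gamma>_def pad_def using w3 pad_prod by simp
  moreover have "transitive_star n k \<gamma>" unfolding transitive_star_def
  proof (intro ballI impI)
    fix i assume i: "i \<in> {1..n}" "i \<noteq> k"
    show "transpose k i \<in> set \<gamma>"
    proof (cases "\<sigma> i = i")
      case True
      then have "i \<in> set L" unfolding sL F_def using i by blast
      then have "transpose k i \<in> set pad" unfolding pad_def pad_set by blast
      then show ?thesis unfolding \<gamma>_def by simp
    next
      case False then show ?thesis using w2 i unfolding \<gamma>_def by simp
    qed
  qed
  moreover have "length \<gamma> + 2 = n + num_cycles n \<sigma>"
    using w4 pad_len[of k L] lL unfolding \<gamma>_def pad_def F_def[symmetric] by simp
  ultimately show ?thesis unfolding star_set_def star_fact_def by blast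
qed

definition PP :: "nat \<Rightarrow> (nat \<Rightarrow> nat) \<Rightarrow> (nat \<Rightarrow> nat) \<Rightarrow> bool" where
  "PP n \<sigma> \<pi> \<longleftrightarrow> (\<exists>ts. TL n ts \<and> \<pi> = \<sigma> \<circ> word_prod ts \<and> num_cycles n \<pi> = num_cycles n \<sigma> + length ts)"

lemma le_iff:
  assumes k: "k \<in> {1..n}" and sp: "\<sigma> permutes {1..n}"
  shows "star_le n k \<sigma> \<pi> \<longleftrightarrow> PP n \<sigma> \<pi>"
proof
  assume "star_le n k \<sigma> \<pi>"
  then obtain \<gamma> \<delta> where g: "\<gamma> \<in> star_set n k \<sigma>" and d: "\<delta> \<in> star_set n k \<pi>" and sub: "subseq \<gamma> \<delta>"
    unfolding star_le_def by blast
  have SLd: "SL n k \<delta>" using d unfolding star_set_def star_fact_def SL_def by blast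
  obtain ts where ts: "TL n ts" "length ts + length \<gamma> = length \<delta>" "word_prod \<delta> = word_prod \<gamma> \<circ> word_prod ts"
    using del[OF sub SLd k] by blast
  have "word_prod \<delta> = \<pi>" "length \<delta> + 2 = n + num_cycles n \<pi>" using d unfolding star_set_def star_fact_def by auto
  moreover have "word_prod \<gamma> = \<sigma>" "length \<gamma> + 2 = n + num_cycles n \<sigma>" using g unfolding star_set_def star_fact_def by auto
  ultimately show "PP n \<sigma> \<pi>" unfolding PP_def using ts by (intro exI[of _ ts]) auto
next
  assume "PP n \<sigma> \<pi>"
  then obtain ts where ts: "TL n ts" "\<pi> = \<sigma> \<circ> word_prod ts" "num_cycles n \<pi> = num_cycles n \<sigma> + length ts"
    unfolding PP_def by blast
  obtain \<gamma> where g: "\<gamma> \<in> star_set n k \<sigma>" using exist[OF sp k] by blast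
  have SLg: "SL n k \<gamma>" using g unfolding star_set_def star_fact_def SL_def by blast
  have tg: "\<forall>i\<in>{1..n}. i \<noteq> k \<longrightarrow> transpose k i \<in> set \<gamma>" using g unfolding star_set_def transitive_star_def by blast
  obtain \<delta> where d: "SL n k \<delta>" "subseq \<gamma> \<delta>" "length \<delta> = length \<gamma> + length ts" "word_prod \<delta> = word_prod \<gamma> \<circ> word_prod ts"
    using insN[OF ts(1) SLg k tg] by blast
  have gp: "word_prod \<gamma> = \<sigma>" "length \<gamma> + 2 = n + num_cycles n \<sigma>" using g unfolding star_set_def star_fact_def by auto
  have "star_fact n k \<pi> \<delta>" unfolding star_fact_def using d(1,4) gp(1) ts(2) unfolding SL_def by simp
  moreover have "transitive_star n k \<delta>" unfolding transitive_star_def using tg subseq_set[OF d(2)] by blast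
  moreover have "length \<delta> + 2 = n + num_cycles n \<pi>" using d(3) gp(2) ts(3) by simp
  ultimately have "\<delta> \<in> star_set n k \<pi>" unfolding star_set_def by blast
  then show "star_le n k \<sigma> \<pi>" unfolding star_le_def using g d(2) by blast
qed

theorem mainTheorem8:
  fixes n k k' :: nat
  assumes "n \<ge> 1" and "k \<in> {1..n}" and "k' \<in> {1..n}"
  shows "\<forall>\<sigma> \<pi>. \<sigma> permutes {1..n} \<longrightarrow> \<pi> permutes {1..n} \<longrightarrow>
           (star_le n k \<sigma> \<pi> \<longleftrightarrow> star_le n k' \<sigma> \<pi>)"
  using le_iff[OF assms(2)] le_iff[OF assms(3)] by blast

end
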